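(* Let $S$ be a $d\times d$ symmetric positive semidefinite matrix with $S_{ii}>0$ for all $i$, and let $\rho>0$. The positive graphical lasso problem of minimizing $-\log\det K+\operatorname{tr}(SK)+\rho\sum_{i\neq j}\max\{0,K_{ij}\}$ over positive definite $K$ has an optimum, which is unique, as long as $S_{ij}<\sqrt{S_{ii}S_{jj}}$ for all $i\ne j$; this condition holds with probability one if $S=\boldsymbol X^T\boldsymbol X/n$ is the sample covariance of $n\ge2$ i.i.d. observations from $N(0,\Sigma^* )$ with $\Sigma^*$ positive definite. The same holds in general for minimizing $-\log\det K+\operatorname{tr}(SK)+\sum_{i\neq j}\max\{L_{ij}K_{ij},U_{ij}K_{ij}\}$ whenever $U_{ij}>0$ for all $i\neq j$, where $L,U$ are symmetric with entries in $\mathbb{R}\cup\{\pm\infty\}$, $L_{ij}\le0$, $L_{ii}=U_{ii}=0$ (convention $\pm\infty\cdot0=0$). *)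

theory Defs
  imports "HOL-Analysis.Analysis" "HOL-Probability.Probability"
begin

definition sym_mat :: "'a^'n^'n \<Rightarrow> bool" where
  "sym_mat A \<longleftrightarrow> (\<forall>i j. A$i$j = A$j$i)"

definition psd_mat :: "real^'n^'n \<Rightarrow> bool" where
  "psd_mat S \<longleftrightarrow> sym_mat S \<and> (\<forall>x. 0 \<le> x \<bullet> (S *v x))"

definition pd_mat :: "real^'n^'n \<Rightarrow> bool" where
  "pd_mat K \<longleftrightarrow> sym_mat K \<and> (\<forall>x. x \<noteq> 0 \<longrightarrow> 0 < x \<bullet> (K *v x))"

definition pos_glasso_obj :: "real^'n^'n \<Rightarrow> real \<Rightarrow> real^'n^'n \<Rightarrow> real" where
  "pos_glasso_obj S \<rho> K =
     - ln (det K) + trace (S ** K) + \<rho> * (\<Sum>i\<in>UNIV. \<Sum>j\<in>UNIV - {i}. max 0 (K$i$j))"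

text \<open>General objective with extended-real bounds L, U; ereal multiplication
  satisfies (+-infinity) * 0 = 0.\<close>
definition gen_glasso_obj ::
  "real^'n^'n \<Rightarrow> ereal^'n^'n \<Rightarrow> ereal^'n^'n \<Rightarrow> real^'n^'n \<Rightarrow> ereal" where
  "gen_glasso_obj S L U K =
     ereal (- ln (det K) + trace (S ** K)) +
     (\<Sum>i\<in>UNIV. \<Sum>j\<in>UNIV - {i}. max (L$i$j * ereal (K$i$j)) (U$i$j * ereal (K$i$j)))"

definition gauss_vec :: "real^'n^'n \<Rightarrow> (real^'n) measure" where
  "gauss_vec \<Sigma> = density lborel (\<lambda>x. ennreal
     ((2 * pi) powr (- real CARD('n) / 2) * det \<Sigma> powr (-1/2)
       * exp (- (x \<bullet> (matrix_inv \<Sigma> *v x)) / 2)))"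

definition sample_cov :: "nat \<Rightarrow> (nat \<Rightarrow> real^'n) \<Rightarrow> real^'n^'n" where
  "sample_cov n X = (\<chi> i j. (\<Sum>k<n. X k $ i * X k $ j) / real n)"

end

theory Submission
  imports Defs
begin

definition bf :: "real^'n^'n \<Rightarrow> real^'n \<Rightarrow> real^'n \<Rightarrow> real" where
  "bf M x y = x \<bullet> (M *v y)"

lemma bf_sym: "sym_mat M \<Longrightarrow> bf M x y = bf M y x"
proof -
  assume s: "sym_mat M"
  have "bf M x y = (\<Sum>i\<in>UNIV. \<Sum>j\<in>UNIV. x$i * M$i$j * y$j)"
    unfolding bf_def inner_vec_def matrix_vector_mult_def by (simp add: sum_distrib_left mult.assoc)
  also have "\<dots> = (\<Sum>j\<in>UNIV. \<Sum>i\<in>UNIV. x$i * M$i$j * y$j)"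
    by (rule sum.swap)
  also have "\<dots> = (\<Sum>j\<in>UNIV. \<Sum>i\<in>UNIV. y$j * M$j$i * x$i)"
    using s unfolding sym_mat_def by (simp add: mult.commute mult.left_commute)
  also have "\<dots> = bf M y x"
    unfolding bf_def inner_vec_def matrix_vector_mult_def by (simp add: sum_distrib_left mult.assoc)
  finally show ?thesis .
qed

lemma bf_add_left: "bf M (x + y) z = bf M x z + bf M y z"
  by (simp add: bf_def inner_add_left)
lemma bf_scale_left: "bf M (c *\<^sub>R x) z = c * bf M x z"
  by (simp add: bf_def)
lemma bf_add_right: "bf M z (x + y) = bf M z x + bf M z y"
  by (simp add: bf_def matrix_vector_right_distrib inner_add_right)
lemma bf_scale_right: "bf M z (c *\<^sub>R x) = c * bf M z x"
  by (simp add: bf_def matrix_vector_mult_scaleR)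
lemma bf_diff_left: "bf M (x - y) z = bf M x z - bf M y z"
  by (simp add: bf_def inner_diff_left)
lemma bf_zero_left[simp]: "bf M 0 z = 0" by (simp add: bf_def)

lemma bf_expand:
  assumes "sym_mat M"
  shows "bf M (x + t *\<^sub>R y) (x + t *\<^sub>R y) = bf M x x + 2 * t * bf M y x + t^2 * bf M y y"
  using bf_sym[OF assms, of x y]
  by (simp add: bf_add_left bf_add_right bf_scale_left bf_scale_right power2_eq_square algebra_simps)

lemma quad_nonpos_zero:
  fixes b c :: real
  assumes "\<And>t. 2 * t * b + t^2 * c \<le> 0"
  shows "b = 0"
proof (rule ccontr)
  assume b: "b \<noteq> 0"
  define k where "k = \<bar>c\<bar> + 1"
  have pos: "k > 0" by (simp add: k_def)
  define t where "t = b / k"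
  have eq: "2 * t * b + t^2 * c = (b^2 / k) * (2 + c / k)"
    unfolding t_def using pos by (simp add: field_simps power2_eq_square)
  moreover have "c / k > -1" using pos by (simp add: k_def field_simps abs_if)
  then have h1: "2 + c / k > 0" by linarith
  have h2: "b^2 / k > 0" using b pos by simp
  have "2 * t * b + t^2 * c > 0" unfolding eq using h1 h2 by (rule mult_pos_pos[rotated])
  then show False using assms[of t] by linarith
qed

lemma continuous_on_bf[continuous_intros]:
  "continuous_on S f \<Longrightarrow> continuous_on S g \<Longrightarrow> continuous_on S (\<lambda>x. bf M (f x) (g x))"
  unfolding bf_def matrix_vector_mult_def inner_vec_def
  by (intro continuous_intros)

lemma bf_homog: "bf M (c *\<^sub>R x) (c *\<^sub>R x) = c^2 * bf M x x"
  by (simp add: bf_scale_left bf_scale_right power2_eq_square)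

lemma simult_aux:
  fixes A B :: "real^'n^'n"
  assumes sA: "sym_mat A" and pA: "\<And>x. x \<noteq> 0 \<Longrightarrow> 0 < bf A x x" and sB: "sym_mat B"
  shows "subspace V \<Longrightarrow> \<exists>W. span W = V \<and> 0 \<notin> W \<and>
           (\<forall>x\<in>W. \<forall>y\<in>W. x \<noteq> y \<longrightarrow> bf A x y = 0 \<and> bf B x y = 0)"
proof (induction "dim V" arbitrary: V rule: less_induct)
  case less
  show ?case
  proof (cases "V = {0}")
    case True
    then show ?thesis by (intro exI[of _ "{}"]) auto
  next
    case False
    with less.prems obtain v where v: "v \<in> V" "v \<noteq> 0"
      using subspace_0 by blast
    define Sph where "Sph = V \<inter> sphere 0 1"
    have cS: "compact Sph" unfolding Sph_def
      by (intro closed_Int_compact closed_subspace less.prems compact_sphere)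
    have nS: "Sph \<noteq> {}"
    proof -
      have "(1 / norm v) *\<^sub>R v \<in> Sph" using v less.prems unfolding Sph_def
        by (simp add: subspace_scale)
      then show ?thesis by blast
    qed
    define R where "R x = bf B x x / bf A x x" for x
    have "continuous_on Sph R"
    proof -
      have "\<forall>x\<in>Sph. bf A x x \<noteq> 0"
      proof
        fix x assume "x \<in> Sph"
        then have "x \<noteq> 0" unfolding Sph_def by auto
        then show "bf A x x \<noteq> 0" using pA[of x] by simp
      qed
      then show ?thesis unfolding R_def by (intro continuous_intros) auto
    qed
    from continuous_attains_sup[OF cS nS this] obtain u where
      u: "u \<in> Sph" and umax: "\<And>y. y \<in> Sph \<Longrightarrow> R y \<le> R u" by blast
    have uV: "u \<in> V" and u0: "u \<noteq> 0" using u unfolding Sph_def by auto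
    have Aupos: "bf A u u > 0" using pA u0 by blast
    have Rmax: "R z \<le> R u" if "z \<in> V" "z \<noteq> 0" for z
    proof -
      have "(1 / norm z) *\<^sub>R z \<in> Sph" using that less.prems unfolding Sph_def
        by (simp add: subspace_scale)
      then have "R ((1 / norm z) *\<^sub>R z) \<le> R u" by (rule umax)
      moreover have "R ((1 / norm z) *\<^sub>R z) = R z"
        unfolding R_def bf_homog using that by simp
      ultimately show ?thesis by simp
    qed
    define W0 where "W0 = {y \<in> V. bf A y u = 0}"
    have sW0: "subspace W0"
      using less.prems unfolding W0_def subspace_def
      by (auto simp: bf_add_left bf_scale_left)
    have W0V: "W0 \<subset> V"
    proof -
      have "u \<notin> W0" using Aupos unfolding W0_def by auto
      then show ?thesis using uV unfolding W0_def by blast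
    qed
    have spW: "span W0 = W0" "span V = V" using sW0 less.prems by (simp_all add: span_eq_iff)
    have "dim W0 < dim V"
      using dim_psubset[of W0 V] W0V unfolding spW by blast
    from less.hyps[OF this sW0] obtain W' where W':
      "span W' = W0" "0 \<notin> W'" "\<forall>x\<in>W'. \<forall>y\<in>W'. x \<noteq> y \<longrightarrow> bf A x y = 0 \<and> bf B x y = 0"
      by blast
    have key: "bf B y u = 0" if "y \<in> W0" for y
    proof -
      have yV: "y \<in> V" and yA: "bf A y u = 0" using that unfolding W0_def by auto
      define \<mu> where "\<mu> = R u"
      have Bu: "bf B u u = \<mu> * bf A u u" unfolding \<mu>_def R_def using Aupos by simp
      have "2 * t * bf B y u + t^2 * (bf B y y - \<mu> * bf A y y) \<le> 0" for t
      proof -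
        define z where "z = u + t *\<^sub>R y"
        have zV: "z \<in> V" unfolding z_def using uV yV less.prems
          by (simp add: subspace_add subspace_scale)
        have Az: "bf A z z = bf A u u + t^2 * bf A y y"
          unfolding z_def bf_expand[OF sA] yA by simp
        have Ay: "bf A y y \<ge> 0" using pA[of y] by (cases "y = 0") auto
        have Azpos: "bf A z z > 0" using Az Aupos Ay by (simp add: add_pos_nonneg)
        then have z0: "z \<noteq> 0" by auto
        have "R z \<le> \<mu>" unfolding \<mu>_def using Rmax[OF zV z0] .
        then have "bf B z z \<le> \<mu> * bf A z z" unfolding R_def using Azpos
          by (simp add: divide_le_eq)
        then show ?thesis unfolding z_def bf_expand[OF sB] using Az[unfolded z_def] Bu
          by (simp add: algebra_simps)
      qed
      then show ?thesis by (rule quad_nonpos_zero)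
    qed
    have uW': "u \<notin> W'" using W'(1) span_base[of u W'] W0V uV Aupos unfolding W0_def by auto
    show ?thesis
    proof (intro exI[of _ "insert u W'"] conjI)
      show "span (insert u W') = V"
      proof
        show "span (insert u W') \<subseteq> V"
          using W'(1) W0V uV less.prems by (metis insert_subset psubsetE span_minimal span_superset subset_trans)
        show "V \<subseteq> span (insert u W')"
        proof
          fix x assume xV: "x \<in> V"
          define k where "k = bf A x u / bf A u u"
          have "x - k *\<^sub>R u \<in> W0" unfolding W0_def k_def
            using xV uV less.prems Aupos by (simp add: subspace_diff subspace_scale bf_diff_left bf_scale_left)
          then have "x - k *\<^sub>R u \<in> span W'" using W'(1) by simp
          then show "x \<in> span (insert u W')" by (auto simp: span_insert)
        qed
      qed
      show "0 \<notin> insert u W'" using u0 W'(2) by auto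
      show "\<forall>x\<in>insert u W'. \<forall>y\<in>insert u W'. x \<noteq> y \<longrightarrow> bf A x y = 0 \<and> bf B x y = 0"
      proof -
        have "bf A y u = 0 \<and> bf B y u = 0" if "y \<in> W'" for y
          using that W'(1) key[of y] span_base[of y W'] unfolding W0_def by auto
        then show ?thesis using W'(3) bf_sym[OF sA] bf_sym[OF sB] by auto
      qed
    qed
  qed
qed

lemma congr_entry: "(X ** M ** transpose X) $ i $ j = bf M (X$i) (X$j)"
proof -
  have "(X ** M ** transpose X) $ i $ j = (\<Sum>k\<in>UNIV. (\<Sum>l\<in>UNIV. X$i$l * M$l$k) * X$j$k)"
    by (simp add: matrix_matrix_mult_def transpose_def)
  also have "\<dots> = (\<Sum>k\<in>UNIV. \<Sum>l\<in>UNIV. X$i$l * M$l$k * X$j$k)"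
    by (simp add: sum_distrib_right)
  also have "\<dots> = (\<Sum>l\<in>UNIV. \<Sum>k\<in>UNIV. X$i$l * M$l$k * X$j$k)"
    by (rule sum.swap)
  also have "\<dots> = bf M (X$i) (X$j)"
    by (simp add: bf_def inner_vec_def matrix_vector_mult_def sum_distrib_left mult.assoc)
  finally show ?thesis .
qed

lemma det_congr: "det (X ** M ** transpose X) = det X * det X * det M"
  by (simp add: det_mul)

lemma simult:
  fixes A B :: "real^'n^'n"
  assumes sA: "sym_mat A" and pA: "\<And>x. x \<noteq> 0 \<Longrightarrow> 0 < bf A x x" and sB: "sym_mat B"
  shows "\<exists>X::real^'n^'n. det X \<noteq> 0 \<and> (\<forall>i. X$i \<noteq> 0) \<and>
           (\<forall>i j. i \<noteq> j \<longrightarrow> bf A (X$i) (X$j) = 0 \<and> bf B (X$i) (X$j) = 0)"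
proof -
  obtain W where W: "span W = UNIV" "0 \<notin> W"
    "\<forall>x\<in>W. \<forall>y\<in>W. x \<noteq> y \<longrightarrow> bf A x y = 0 \<and> bf B x y = 0"
    using simult_aux[OF sA pA sB, of UNIV] by auto
  have ind: "independent W"
    unfolding independent_explicit_finite_subsets
  proof (intro allI impI ballI)
    fix T u v assume T: "T \<subseteq> W" "finite T" and su: "(\<Sum>v\<in>T. u v *\<^sub>R v) = 0" and v: "v \<in> T"
    have "0 = bf A (\<Sum>w\<in>T. u w *\<^sub>R w) v" using su by simp
    also have "\<dots> = (\<Sum>w\<in>T. u w * bf A w v)"
      by (simp add: bf_def inner_sum_left)
    also have "\<dots> = u v * bf A v v"
      using T v W(3) by (subst sum.remove[OF T(2) v]) (force intro!: sum.neutral)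
    finally have "u v * bf A v v = 0" by simp
    moreover have "bf A v v > 0" using pA[of v] v T W(2) by auto
    ultimately show "u v = 0" by simp
  qed
  have fW: "finite W" using ind by (rule finiteI_independent)
  have "card W = dim (UNIV :: (real^'n) set)"
    using basis_card_eq_dim[of W UNIV] ind W(1) by auto
  then have cW: "card W = CARD('n)" by simp
  obtain e where e: "bij_betw e (UNIV::'n set) W"
    using finite_same_card_bij[of "UNIV::'n set" W] fW cW by auto
  define X :: "real^'n^'n" where "X = (\<chi> i. e i)"
  have Xi: "X$i = e i" for i unfolding X_def by simp
  have eW: "e i \<in> W" for i using e by (auto simp: bij_betw_def)
  have einj: "e i \<noteq> e j" if "i \<noteq> j" for i j using e that by (auto simp: bij_betw_def inj_on_def)
  have X0: "\<forall>i. X$i \<noteq> 0" using eW W(2) Xi by metis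
  have Xo: "\<forall>i j. i \<noteq> j \<longrightarrow> bf A (X$i) (X$j) = 0 \<and> bf B (X$i) (X$j) = 0"
    using W(3) eW einj Xi by metis
  have "det (X ** A ** transpose X) = (\<Prod>i\<in>UNIV. bf A (X$i) (X$i))"
    by (subst det_diagonal) (use Xo in \<open>auto simp: congr_entry\<close>)
  moreover have "(\<Prod>i\<in>UNIV. bf A (X$i) (X$i)) > 0"
    using X0 pA by (intro prod_pos) auto
  ultimately have "det X * det X * det A \<noteq> 0" unfolding det_congr by linarith
  then have "det X \<noteq> 0" by auto
  then show ?thesis using X0 Xo by blast
qed

lemma pd_bf: "pd_mat K \<Longrightarrow> x \<noteq> 0 \<Longrightarrow> 0 < bf K x x"
  unfolding pd_mat_def bf_def by auto

lemma pd_sym: "pd_mat K \<Longrightarrow> sym_mat K"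
  unfolding pd_mat_def by auto

lemma sym_I: "sym_mat (mat 1 :: real^'n^'n)"
  unfolding sym_mat_def by (simp add: mat_def)

lemma bf_I: "bf (mat 1) x x = x \<bullet> x"
  by (simp add: bf_def)

lemma pd_I: "x \<noteq> 0 \<Longrightarrow> 0 < bf (mat 1 :: real^'n^'n) x x"
  by (simp add: bf_I)

lemma trace_diag_right:
  fixes N D :: "real^'n^'n"
  assumes "\<And>i j. i \<noteq> j \<Longrightarrow> D$i$j = 0"
  shows "trace (N ** D) = (\<Sum>i\<in>UNIV. N$i$i * D$i$i)"
proof -
  have "trace (N ** D) = (\<Sum>i\<in>UNIV. \<Sum>k\<in>UNIV. N$i$k * D$k$i)"
    by (simp add: trace_def matrix_matrix_mult_def)
  also have "\<dots> = (\<Sum>i\<in>UNIV. N$i$i * D$i$i)"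
  proof (rule sum.cong[OF refl])
    fix i
    show "(\<Sum>k\<in>UNIV. N$i$k * D$k$i) = N$i$i * D$i$i"
      by (subst sum.remove[of UNIV i]) (auto simp: assms intro!: sum.neutral)
  qed
  finally show ?thesis .
qed

lemma pd_det_pos:
  fixes K :: "real^'n^'n"
  assumes "pd_mat K"
  shows "det K > 0"
proof -
  obtain X :: "real^'n^'n" where X: "det X \<noteq> 0" "\<forall>i. X$i \<noteq> 0"
     "\<forall>i j. i \<noteq> j \<longrightarrow> bf (mat 1) (X$i) (X$j) = 0 \<and> bf K (X$i) (X$j) = 0"
    using simult[OF sym_I pd_I pd_sym[OF assms]] by blast
  have "det (X ** K ** transpose X) = (\<Prod>i\<in>UNIV. bf K (X$i) (X$i))"
    by (subst det_diagonal) (use X in \<open>auto simp: congr_entry\<close>)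
  moreover have "(\<Prod>i\<in>UNIV. bf K (X$i) (X$i)) > 0"
    using X pd_bf[OF assms] by (intro prod_pos) auto
  ultimately have "det X * det X * det K > 0" unfolding det_congr by linarith
  moreover have "det X * det X > 0" using X(1) by (metis not_real_square_gt_zero)
  ultimately show ?thesis by (simp add: zero_less_mult_iff)
qed

lemma psd_trace_nonneg:
  fixes S K :: "real^'n^'n"
  assumes sS: "sym_mat S" and pS: "\<And>x. 0 \<le> bf S x x"
    and sK: "sym_mat K" and pK: "\<And>x. 0 \<le> bf K x x"
  shows "trace (S ** K) \<ge> 0"
proof -
  obtain X :: "real^'n^'n" where X: "det X \<noteq> 0" "\<forall>i. X$i \<noteq> 0"
     "\<forall>i j. i \<noteq> j \<longrightarrow> bf (mat 1) (X$i) (X$j) = 0 \<and> bf K (X$i) (X$j) = 0"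
    using simult[OF sym_I pd_I sK] by blast
  define D where "D = X ** K ** transpose X"
  have inv: "invertible X" using X(1) by (simp add: invertible_det_nz)
  then obtain Y where YX: "Y ** X = mat 1" unfolding invertible_def by blast
  have KD: "K = Y ** D ** transpose Y"
  proof -
    have "Y ** D ** transpose Y = (Y ** X) ** K ** (transpose (Y ** X))"
      unfolding D_def by (simp add: matrix_mul_assoc matrix_transpose_mul)
    then show ?thesis by (simp add: YX transpose_mat)
  qed
  have Dd: "\<And>i j. i \<noteq> j \<Longrightarrow> D$i$j = 0" unfolding D_def using X by (simp add: congr_entry)
  have "trace (S ** K) = trace ((S ** Y ** D) ** transpose Y)"
    unfolding KD by (simp add: matrix_mul_assoc)
  also have "\<dots> = trace (transpose Y ** (S ** Y ** D))" by (rule trace_mul_sym)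
  also have "\<dots> = trace ((transpose Y ** S ** transpose (transpose Y)) ** D)"
    by (simp add: matrix_mul_assoc)
  also have "\<dots> = (\<Sum>i\<in>UNIV. (transpose Y ** S ** transpose (transpose Y))$i$i * D$i$i)"
    by (rule trace_diag_right[OF Dd])
  also have "\<dots> \<ge> 0"
  proof (intro sum_nonneg mult_nonneg_nonneg)
    fix i
    show "0 \<le> (transpose Y ** S ** transpose (transpose Y))$i$i"
      unfolding congr_entry by (rule pS)
    show "0 \<le> D$i$i" unfolding D_def congr_entry by (rule pK)
  qed
  finally show ?thesis .
qed

lemma psd_det_pd:
  fixes K :: "real^'n^'n"
  assumes sK: "sym_mat K" and pK: "\<And>x. 0 \<le> bf K x x" and d: "det K \<noteq> 0"
  shows "pd_mat K"
  unfolding pd_mat_def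
proof (intro conjI sK allI impI)
  fix x :: "real^'n" assume x0: "x \<noteq> 0"
  show "0 < x \<bullet> (K *v x)"
  proof (rule ccontr)
    assume "\<not> 0 < x \<bullet> (K *v x)"
    then have q0: "bf K x x = 0" using pK[of x] by (simp add: bf_def)
    have b0: "bf K y x = 0" for y
    proof -
      have "2 * t * (- bf K y x) + t^2 * (- bf K y y) \<le> 0" for t
        using pK[of "x + t *\<^sub>R y"] unfolding bf_expand[OF sK] q0 by simp
      then have "- bf K y x = 0" by (rule quad_nonpos_zero)
      then show ?thesis by simp
    qed
    have "(K *v x) \<bullet> (K *v x) = 0" using b0[of "K *v x"] by (simp add: bf_def)
    then have Kx: "K *v x = 0" by simp
    have inv: "invertible K" using d by (simp add: invertible_det_nz)
    then obtain Y where YK: "Y ** K = mat 1" unfolding invertible_def by blast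
    have "x = (Y ** K) *v x" using YK by simp
    also have "\<dots> = 0" by (simp add: matrix_vector_mul_assoc[symmetric] Kx)
    finally show False using x0 by simp
  qed
qed

lemma bf_axis: "bf M (axis i 1) (axis j 1) = M$i$j"
proof -
  have "bf M (axis i 1) (axis j 1) = (M *v axis j 1)$i"
    unfolding bf_def inner_axis' by simp
  also have "\<dots> = (\<Sum>l\<in>UNIV. M$i$l * (if l = j then 1 else 0))"
    by (simp add: matrix_vector_mult_def axis_def)
  also have "\<dots> = M$i$j" by (simp add: if_distrib cong: if_cong)
  finally show ?thesis .
qed

lemma psd_diag_nonneg: "(\<And>x. 0 \<le> bf K x x) \<Longrightarrow> 0 \<le> K$i$i"
  using bf_axis[of K i i] by metis

lemma psd_offdiag_bound:
  fixes K :: "real^'n^'n"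
  assumes sK: "sym_mat K" and pK: "\<And>x. 0 \<le> bf K x x"
  shows "\<bar>K$i$j\<bar> \<le> (K$i$i + K$j$j) / 2"
proof -
  have "0 \<le> K$i$i + 2 * t * K$j$i + t^2 * K$j$j" for t
    using pK[of "axis i 1 + t *\<^sub>R axis j 1"] unfolding bf_expand[OF sK] bf_axis .
  from this[of 1] this[of "-1"] have "\<bar>K$j$i\<bar> \<le> (K$i$i + K$j$j) / 2" by (simp add: abs_le_iff)
  moreover have "K$j$i = K$i$j" using sK unfolding sym_mat_def by simp
  ultimately show ?thesis by simp
qed

lemma psd_entry_le_trace:
  fixes K :: "real^'n^'n"
  assumes sK: "sym_mat K" and pK: "\<And>x. 0 \<le> bf K x x"
  shows "\<bar>K$i$j\<bar> \<le> trace K"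
proof -
  have le: "K$k$k \<le> trace K" for k
    unfolding trace_def
    by (rule member_le_sum) (auto intro: psd_diag_nonneg[OF pK])
  have "\<bar>K$i$j\<bar> \<le> (K$i$i + K$j$j) / 2" by (rule psd_offdiag_bound[OF assms])
  have c: "(K$i$i + K$j$j)/2 \<le> trace K" using le[of i] le[of j] by (simp add: field_simps)
  show ?thesis using \<open>\<bar>K$i$j\<bar> \<le> (K$i$i + K$j$j) / 2\<close> c by (rule order_trans)
qed

lemma det_abs_bound:
  fixes K :: "real^'n^'n"
  assumes "\<And>i j. \<bar>K$i$j\<bar> \<le> T"
  shows "\<bar>det K\<bar> \<le> fact CARD('n) * T ^ CARD('n)"
proof -
  have T0: "T \<ge> 0" using assms[of undefined undefined] by linarith
  have "\<bar>det K\<bar> \<le> (\<Sum>p\<in>{p. p permutes (UNIV::'n set)}. \<bar>of_int (sign p) * (\<Prod>i\<in>UNIV. K$i$p i)\<bar>)"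
    unfolding det_def by (rule sum_abs)
  also have "\<dots> \<le> (\<Sum>p\<in>{p. p permutes (UNIV::'n set)}. T ^ CARD('n))"
  proof (rule sum_mono)
    fix p assume "p \<in> {p. p permutes (UNIV::'n set)}"
    have "\<bar>of_int (sign p) * (\<Prod>i\<in>UNIV. K$i$p i)\<bar> = (\<Prod>i\<in>UNIV. \<bar>K$i$p i\<bar>)"
      by (simp add: abs_mult abs_prod sign_def)
    also have "\<dots> \<le> (\<Prod>i\<in>(UNIV::'n set). T)"
      by (intro prod_mono) (auto intro: assms)
    finally show "\<bar>of_int (sign p) * (\<Prod>i\<in>UNIV. K$i$p i)\<bar> \<le> T ^ CARD('n)" by simp
  qed
  also have "\<dots> = fact CARD('n) * T ^ CARD('n)"
    by (simp add: card_permutations)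
  finally show ?thesis .
qed

lemma bf_mat_add: "bf (A + B) x y = bf A x y + bf B x y"
  by (simp add: bf_def matrix_vector_mult_add_rdistrib inner_add_right)

lemma bf_mat_scale: "bf (c *\<^sub>R A) x y = c * bf A x y"
  by (simp add: bf_def matrix_vector_mult_def inner_vec_def sum_distrib_left algebra_simps)

lemma bf_mid: "bf ((1/2) *\<^sub>R (A + B)) x y = (bf A x y + bf B x y) / 2"
  by (simp add: bf_mat_scale bf_mat_add)

lemma sym_mid: "sym_mat A \<Longrightarrow> sym_mat B \<Longrightarrow> sym_mat ((1/2) *\<^sub>R (A + B))"
  unfolding sym_mat_def by simp

lemma pd_mid: "pd_mat A \<Longrightarrow> pd_mat B \<Longrightarrow> pd_mat ((1/2) *\<^sub>R (A + B))"
proof -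
  assume a: "pd_mat A" and b: "pd_mat B"
  have "sym_mat ((1/2) *\<^sub>R (A + B))" using a b by (simp add: pd_sym sym_mid)
  moreover have "x \<noteq> 0 \<Longrightarrow> 0 < bf ((1/2) *\<^sub>R (A + B)) x x" for x
    using pd_bf[OF a, of x] pd_bf[OF b, of x] by (simp add: bf_mid)
  ultimately show ?thesis unfolding pd_mat_def bf_def by auto
qed

lemma prod_strict_mono':
  fixes f g :: "'a \<Rightarrow> real"
  assumes fin: "finite I" and le: "\<And>i. i \<in> I \<Longrightarrow> 0 < f i \<and> f i \<le> g i"
    and i0: "i0 \<in> I" and lt: "f i0 < g i0"
  shows "prod f I < prod g I"
proof -
  have pf: "prod f (I - {i0}) > 0" using le by (intro prod_pos) auto
  have pfg: "prod f (I - {i0}) \<le> prod g (I - {i0})" using le by (intro prod_mono) (auto intro: less_imp_le)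
  have "prod f I = f i0 * prod f (I - {i0})" using fin i0 by (rule prod.remove)
  also have "\<dots> < g i0 * prod f (I - {i0})" using lt pf by simp
  also have "\<dots> \<le> g i0 * prod g (I - {i0})" using pfg le[OF i0] by (intro mult_left_mono) auto
  also have "\<dots> = prod g I" using fin i0 by (rule prod.remove[symmetric])
  finally show ?thesis .
qed

lemma congr_cancel:
  fixes X A B :: "real^'n^'n"
  assumes "det X \<noteq> 0" and "X ** A ** transpose X = X ** B ** transpose X"
  shows "A = B"
proof -
  have inv: "invertible X" using assms(1) by (simp add: invertible_det_nz)
  then obtain Y where YX: "Y ** X = mat 1" unfolding invertible_def by blast
  have "M = Y ** (X ** M ** transpose X) ** transpose Y" for M :: "real^'n^'n"
  proof -
    have "Y ** (X ** M ** transpose X) ** transpose Y = (Y ** X) ** M ** (transpose (Y ** X))"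
      by (simp add: matrix_mul_assoc matrix_transpose_mul)
    then show ?thesis by (simp add: YX transpose_mat)
  qed
  then show ?thesis using assms(2) by metis
qed

lemma det_mid_strict:
  fixes A B :: "real^'n^'n"
  assumes pA: "pd_mat A" and pB: "pd_mat B" and ne: "A \<noteq> B"
  shows "det A * det B < (det ((1/2) *\<^sub>R (A + B)))^2"
proof -
  obtain X :: "real^'n^'n" where X: "det X \<noteq> 0" "\<forall>i. X$i \<noteq> 0"
     "\<forall>i j. i \<noteq> j \<longrightarrow> bf A (X$i) (X$j) = 0 \<and> bf B (X$i) (X$j) = 0"
    using simult[OF pd_sym[OF pA] pd_bf[OF pA] pd_sym[OF pB]] by blast
  define M where "M = (1/2) *\<^sub>R (A + B)"
  define a where "a i = bf A (X$i) (X$i)" for i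
  define b where "b i = bf B (X$i) (X$i)" for i
  have a0: "a i > 0" for i unfolding a_def using X(2) pd_bf[OF pA] by blast
  have b0: "b i > 0" for i unfolding b_def using X(2) pd_bf[OF pB] by blast
  define \<delta> where "\<delta> = det X * det X"
  have d0: "\<delta> > 0" unfolding \<delta>_def using X(1) by (metis not_real_square_gt_zero)
  have dA: "\<delta> * det A = (\<Prod>i\<in>UNIV. a i)"
    unfolding \<delta>_def a_def det_congr[symmetric]
    by (subst det_diagonal) (use X in \<open>auto simp: congr_entry\<close>)
  have dB: "\<delta> * det B = (\<Prod>i\<in>UNIV. b i)"
    unfolding \<delta>_def b_def det_congr[symmetric]
    by (subst det_diagonal) (use X in \<open>auto simp: congr_entry\<close>)
  have dM: "\<delta> * det M = (\<Prod>i\<in>UNIV. (a i + b i) / 2)"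
    unfolding \<delta>_def a_def b_def det_congr[symmetric] M_def
    by (subst det_diagonal) (use X in \<open>auto simp: congr_entry bf_mid\<close>)
  have "\<exists>i. a i \<noteq> b i"
  proof (rule ccontr)
    assume "\<not> (\<exists>i. a i \<noteq> b i)"
    then have "X ** A ** transpose X = X ** B ** transpose X"
      using X(3) unfolding a_def b_def vec_eq_iff congr_entry by (metis)
    then have "A = B" using congr_cancel X(1) by blast
    then show False using ne by simp
  qed
  then obtain i0 where i0: "a i0 \<noteq> b i0" by blast
  have "(\<Prod>i\<in>UNIV. a i * b i) < (\<Prod>i\<in>UNIV. ((a i + b i) / 2)^2)"
  proof (rule prod_strict_mono'[of UNIV _ _ i0])
    fix i :: 'n
    have "((a i + b i) / 2)^2 - a i * b i = ((a i - b i) / 2)^2" by (simp add: power2_eq_square field_simps)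
    then show "0 < a i * b i \<and> a i * b i \<le> ((a i + b i) / 2)^2"
      using a0[of i] b0[of i] by (smt (verit) zero_le_power2 mult_pos_pos)
  next
    have "((a i0 + b i0) / 2)^2 - a i0 * b i0 = ((a i0 - b i0) / 2)^2" by (simp add: power2_eq_square field_simps)
    moreover have "((a i0 - b i0) / 2)^2 > 0" using i0 by simp
    ultimately show "a i0 * b i0 < ((a i0 + b i0) / 2)^2" by linarith
  qed auto
  then have "(\<delta> * det A) * (\<delta> * det B) < (\<delta> * det M)^2"
    unfolding dA dB dM by (simp add: prod.distrib prod_power_distrib)
  then have "\<delta>^2 * (det A * det B) < \<delta>^2 * (det M)^2"
    by (simp add: power2_eq_square algebra_simps)
  then show ?thesis unfolding M_def using d0 by simp
qed

lemma ln_det_mid_strict: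
  fixes A B :: "real^'n^'n"
  assumes pA: "pd_mat A" and pB: "pd_mat B" and ne: "A \<noteq> B"
  shows "- ln (det ((1/2) *\<^sub>R (A + B))) < (- ln (det A) + - ln (det B)) / 2"
proof -
  have a: "det A > 0" and b: "det B > 0" and m: "det ((1/2) *\<^sub>R (A + B)) > 0"
    using pd_det_pos pA pB pd_mid by blast+
  have "ln (det A * det B) < ln ((det ((1/2) *\<^sub>R (A + B)))^2)"
  proof (rule ln_less_cancel_iff[THEN iffD2])
    show "0 < det A * det B" using a b by simp
    show "0 < (det ((1/2) *\<^sub>R (A + B)))^2" using m by simp
    show "det A * det B < (det ((1/2) *\<^sub>R (A + B)))^2" using det_mid_strict[OF assms] .
  qed
  then show ?thesis using a b m by (simp add: ln_mult ln_realpow)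
qed

definition pen :: "ereal \<Rightarrow> ereal \<Rightarrow> real \<Rightarrow> ereal" where
  "pen l u k = max (l * ereal k) (u * ereal k)"

definition phi :: "ereal \<Rightarrow> ereal \<Rightarrow> real \<Rightarrow> real" where
  "phi l u k = max (real_of_ereal l * k) (real_of_ereal u * k)"

definition feas1 :: "ereal \<Rightarrow> ereal \<Rightarrow> real \<Rightarrow> bool" where
  "feas1 l u k \<longleftrightarrow> (u = \<infinity> \<longrightarrow> k \<le> 0) \<and> (l = -\<infinity> \<longrightarrow> 0 \<le> k)"

lemma pen_feas:
  assumes "l \<le> 0" "u > 0" "feas1 l u k"
  shows "pen l u k = ereal (phi l u k)"
  using assms unfolding pen_def phi_def feas1_def
  by (cases l; cases u; cases "k > 0"; cases "k = 0") (auto simp: max_def mult_le_0_iff)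

lemma pen_infeas:
  assumes "l \<le> 0" "u > 0" "\<not> feas1 l u k"
  shows "pen l u k = \<infinity>"
  using assms unfolding pen_def phi_def feas1_def
  by (cases l; cases u; cases "k > 0"; cases "k = 0") (auto simp: max_def)

lemma pen_lb:
  assumes "l \<le> 0" "ereal \<rho> \<le> u" "\<rho> > 0"
  shows "ereal (\<rho> * max 0 k) \<le> pen l u k"
proof (cases "k \<ge> 0")
  case True
  have "ereal (\<rho> * k) = ereal \<rho> * ereal k" by simp
  also have "\<dots> \<le> u * ereal k" using assms(2) True by (intro ereal_mult_right_mono) auto
  finally show ?thesis using True unfolding pen_def by (simp add: max.coboundedI2)
next
  case False
  have "0 \<le> l * ereal k" using assms(1) False
    by (cases l) (auto simp: mult_nonpos_nonpos)
  have e: "ereal (\<rho> * max 0 k) = 0" using False by simp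
  show ?thesis unfolding pen_def e using \<open>0 \<le> l * ereal k\<close> by (rule max.coboundedI1)
qed

lemma phi_lb:
  assumes "l \<le> 0" "ereal \<rho> \<le> u" "\<rho> > 0" "u > 0" "feas1 l u k"
  shows "\<rho> * max 0 k \<le> phi l u k"
  using pen_lb[OF assms(1-3), of k] pen_feas[OF assms(1,4,5)] by simp

lemma phi_conv: "phi l u ((x + y) / 2) \<le> (phi l u x + phi l u y) / 2"
  unfolding phi_def by (simp add: max_def field_simps)

lemma phi_zero[simp]: "phi l u 0 = 0" by (simp add: phi_def)

lemma feas1_mid: "feas1 l u x \<Longrightarrow> feas1 l u y \<Longrightarrow> feas1 l u ((x + y) / 2)"
  unfolding feas1_def by auto

lemma finite_pos_lb:
  fixes g :: "'a \<Rightarrow> real"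
  assumes "finite A" "\<And>x. x \<in> A \<Longrightarrow> 0 < g x"
  shows "\<exists>r>0. \<forall>x\<in>A. r \<le> g x"
  using assms
proof (induction A rule: finite_induct)
  case empty then show ?case by (intro exI[of _ 1]) auto
next
  case (insert a A)
  then obtain r where "r > 0" "\<forall>x\<in>A. r \<le> g x" by auto
  then show ?case using insert.prems by (intro exI[of _ "min r (g a)"]) auto
qed

lemma sum_split_diag:
  fixes f :: "'n::finite \<Rightarrow> real"
  shows "(\<Sum>j\<in>UNIV. f j) = f i + (\<Sum>j\<in>UNIV - {i}. f j)"
  by (simp add: sum.remove)

lemma trace_expand:
  fixes S K :: "real^'n^'n"
  assumes "sym_mat K"
  shows "trace (S ** K) = (\<Sum>i\<in>UNIV. S$i$i * K$i$i) + (\<Sum>i\<in>UNIV. \<Sum>j\<in>UNIV - {i}. S$i$j * K$i$j)"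
proof -
  have "trace (S ** K) = (\<Sum>i\<in>UNIV. \<Sum>j\<in>UNIV. S$i$j * K$i$j)"
    using assms unfolding trace_def matrix_matrix_mult_def sym_mat_def by simp
  also have "\<dots> = (\<Sum>i\<in>UNIV. S$i$i * K$i$i + (\<Sum>j\<in>UNIV - {i}. S$i$j * K$i$j))"
    by (intro sum.cong refl sum_split_diag)
  finally show ?thesis by (simp add: sum.distrib)
qed

lemma bf_expand_sum:
  fixes K :: "real^'n^'n"
  shows "bf K v v = (\<Sum>i\<in>UNIV. v$i * v$i * K$i$i) + (\<Sum>i\<in>UNIV. \<Sum>j\<in>UNIV - {i}. v$i * v$j * K$i$j)"
proof -
  have "bf K v v = (\<Sum>i\<in>UNIV. \<Sum>j\<in>UNIV. v$i * v$j * K$i$j)"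
    unfolding bf_def inner_vec_def matrix_vector_mult_def
    by (simp add: sum_distrib_left mult.commute mult.left_commute)
  also have "\<dots> = (\<Sum>i\<in>UNIV. v$i * v$i * K$i$i + (\<Sum>j\<in>UNIV - {i}. v$i * v$j * K$i$j))"
    by (intro sum.cong refl sum_split_diag)
  finally show ?thesis by (simp add: sum.distrib)
qed

lemma trace_lb:
  fixes S :: "real^'n^'n" and \<rho>0 :: real
  assumes pS: "psd_mat S" and dS: "\<forall>i. S$i$i > 0"
    and oS: "\<forall>i j. i \<noteq> j \<longrightarrow> S$i$j < sqrt (S$i$i * S$j$j)" and r0: "\<rho>0 > 0"
  shows "\<exists>\<alpha>>0. \<forall>K::real^'n^'n. sym_mat K \<and> (\<forall>x. 0 \<le> bf K x x) \<longrightarrow>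
           \<alpha> * trace K \<le> trace (S ** K) + \<rho>0 * (\<Sum>i\<in>UNIV. \<Sum>j\<in>UNIV - {i}. max 0 (K$i$j))"
proof -
  have sS: "sym_mat S" and qS: "\<And>x. 0 \<le> bf S x x" using pS unfolding psd_mat_def bf_def by auto
  define s where "s i = sqrt (S$i$i)" for i
  define sv :: "real^'n" where "sv = (\<chi> i. s i)"
  define \<epsilon> where "\<epsilon> i j = s i * s j - S$i$j" for i j
  have ss: "s i * s i = S$i$i" for i
  proof -
    have "0 \<le> S$i$i" using dS less_imp_le by blast
    then show ?thesis unfolding s_def by simp
  qed
  have s0: "s i \<ge> 0" for i
  proof -
    have "0 \<le> S$i$i" using dS less_imp_le by blast
    then show ?thesis unfolding s_def by simp
  qed
  have epos: "\<epsilon> i j > 0" if "i \<noteq> j" for i j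
    using oS that unfolding \<epsilon>_def s_def by (simp add: real_sqrt_mult)
  obtain e where e0: "e > 0" and ele: "\<forall>p\<in>{p::'n\<times>'n. fst p \<noteq> snd p}. e \<le> \<epsilon> (fst p) (snd p)"
    using finite_pos_lb[of "{p::'n\<times>'n. fst p \<noteq> snd p}" "\<lambda>p. \<epsilon> (fst p) (snd p)"] epos by auto
  have ele': "e \<le> \<epsilon> i j" if "i \<noteq> j" for i j using ele that by auto
  define E where "E = (\<Sum>i\<in>UNIV. \<Sum>j\<in>UNIV. \<bar>\<epsilon> i j\<bar>) + 1"
  have Ege: "\<epsilon> i j \<le> E" for i j
  proof -
    have "\<bar>\<epsilon> i j\<bar> \<le> (\<Sum>j\<in>UNIV. \<bar>\<epsilon> i j\<bar>)" by (rule member_le_sum) auto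
    also have "\<dots> \<le> (\<Sum>i\<in>UNIV. \<Sum>j\<in>UNIV. \<bar>\<epsilon> i j\<bar>)" by (rule member_le_sum) (auto intro: sum_nonneg)
    finally show ?thesis unfolding E_def by linarith
  qed
  have E0: "E > 0" unfolding E_def by (smt (verit) sum_nonneg abs_ge_zero)
  define M where "M = (\<Sum>i\<in>UNIV. \<Sum>j\<in>UNIV. s i * s j) + 1"
  have Mge: "s i * s j \<le> M" for i j
  proof -
    have "s i * s j \<le> (\<Sum>j\<in>UNIV. s i * s j)" by (rule member_le_sum) (auto simp: s0)
    also have "\<dots> \<le> (\<Sum>i\<in>UNIV. \<Sum>j\<in>UNIV. s i * s j)"
      by (rule member_le_sum) (auto intro!: sum_nonneg simp: s0)
    finally show ?thesis unfolding M_def by linarith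
  qed
  have M0: "M > 0" unfolding M_def using s0 by (smt (verit) sum_nonneg mult_nonneg_nonneg)
  obtain m where m0: "m > 0" and mle: "\<forall>i\<in>UNIV. m \<le> S$i$i"
    using finite_pos_lb[of "UNIV::'n set" "\<lambda>i. S$i$i"] dS by auto
  define lam where "lam = min 1 (\<rho>0 / (2 * E))"
  define \<beta> where "\<beta> = min (lam * e) (\<rho>0 / 2)"
  define \<mu> where "\<mu> = min 1 (\<beta> / (lam * M))"
  have l0: "lam > 0" and l1: "lam \<le> 1" and lE: "lam * E \<le> \<rho>0 / 2"
    unfolding lam_def using r0 E0 by (auto simp: min_def field_simps)
  have b0: "\<beta> > 0" unfolding \<beta>_def using l0 e0 r0 by simp
  have m1: "\<mu> > 0" "\<mu> \<le> 1" unfolding \<mu>_def using b0 l0 M0 by auto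
  have lmM: "lam * \<mu> * M \<le> \<beta>"
  proof -
    have "\<mu> \<le> \<beta> / (lam * M)" unfolding \<mu>_def by simp
    then have "\<mu> * (lam * M) \<le> \<beta>" using l0 M0 by (simp add: le_divide_eq)
    then show ?thesis by (simp add: algebra_simps)
  qed
  show ?thesis
  proof (intro exI[of _ "lam * \<mu> * m"] conjI allI impI)
    show "lam * \<mu> * m > 0" using l0 m1 m0 by simp
    fix K :: "real^'n^'n" assume K: "sym_mat K \<and> (\<forall>x. 0 \<le> bf K x x)"
    then have sK: "sym_mat K" and pK: "\<And>x. 0 \<le> bf K x x" by auto
    have Kd: "0 \<le> K$i$i" for i by (rule psd_diag_nonneg[OF pK])
    define T where "T = trace K"
    define Q where "Q = (\<Sum>i\<in>UNIV. \<Sum>j\<in>UNIV - {i}. \<bar>K$i$j\<bar>)"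
    define P where "P = (\<Sum>i\<in>UNIV. \<Sum>j\<in>UNIV - {i}. max 0 (K$i$j))"
    define Z where "Z = (\<Sum>i\<in>UNIV. \<Sum>j\<in>UNIV - {i}. \<epsilon> i j * K$i$j)"
    define D where "D = (\<Sum>i\<in>UNIV. S$i$i * K$i$i)"
    define tr where "tr = trace (S ** K)"
    define qs where "qs = bf K sv sv"
    have Q0: "Q \<ge> 0" unfolding Q_def by (intro sum_nonneg) auto
    have tr_eq: "tr = D + (\<Sum>i\<in>UNIV. \<Sum>j\<in>UNIV - {i}. S$i$j * K$i$j)"
      unfolding tr_def D_def by (rule trace_expand[OF sK])
    have qs_eq: "qs = D + (\<Sum>i\<in>UNIV. \<Sum>j\<in>UNIV - {i}. s i * s j * K$i$j)"
      unfolding qs_def D_def using bf_expand_sum[of K sv] by (simp add: sv_def ss)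
    have Zeq: "Z = (\<Sum>i\<in>UNIV. \<Sum>j\<in>UNIV - {i}. s i * s j * K$i$j) - (\<Sum>i\<in>UNIV. \<Sum>j\<in>UNIV - {i}. S$i$j * K$i$j)"
      unfolding Z_def \<epsilon>_def by (simp only: left_diff_distrib sum_subtractf)
    have "tr = qs - Z"
      unfolding tr_eq qs_eq Zeq by simp
    have tr0: "tr \<ge> 0" unfolding tr_def by (rule psd_trace_nonneg[OF sS qS sK pK])
    have qs0: "qs \<ge> 0" unfolding qs_def by (rule pK)
    have pw: "\<beta> * \<bar>k\<bar> \<le> \<rho>0 * max 0 k - lam * (\<epsilon> i j * k)" if "i \<noteq> j" for i j k
    proof (cases "k \<ge> 0")
      case True
      have "lam * \<epsilon> i j \<le> lam * E" using Ege l0 by (intro mult_left_mono) auto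
      then have "lam * \<epsilon> i j \<le> \<rho>0 / 2" using lE by linarith
      then have "lam * \<epsilon> i j * k \<le> \<rho>0 / 2 * k" using True by (intro mult_right_mono) auto
      moreover have "\<beta> * k \<le> \<rho>0 / 2 * k" unfolding \<beta>_def using True by (intro mult_right_mono) auto
      ultimately show ?thesis using True by (simp add: algebra_simps)
    next
      case False
      have "lam * e \<le> lam * \<epsilon> i j" using ele'[OF that] l0 by simp
      then have "\<beta> \<le> lam * \<epsilon> i j" unfolding \<beta>_def by linarith
      then have "\<beta> * (- k) \<le> lam * \<epsilon> i j * (- k)" using False by (intro mult_right_mono) auto
      then show ?thesis using False by (simp add: algebra_simps)
    qed
    have step6: "\<beta> * Q \<le> \<rho>0 * P - lam * Z"
    proof -
      have "\<beta> * Q = (\<Sum>i\<in>UNIV. \<Sum>j\<in>UNIV - {i}. \<beta> * \<bar>K$i$j\<bar>)"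
        unfolding Q_def by (simp add: sum_distrib_left)
      also have "\<dots> \<le> (\<Sum>i\<in>UNIV. \<Sum>j\<in>UNIV - {i}. \<rho>0 * max 0 (K$i$j) - lam * (\<epsilon> i j * K$i$j))"
        by (intro sum_mono pw) auto
      also have "\<dots> = \<rho>0 * P - lam * Z"
        unfolding P_def Z_def by (simp add: sum_subtractf sum_distrib_left)
      finally show ?thesis .
    qed
    have step7: "m * T - M * Q \<le> qs"
    proof -
      have "m * T \<le> D" unfolding T_def trace_def D_def sum_distrib_left
        using mle Kd by (intro sum_mono mult_right_mono) auto
      moreover have "- (M * Q) \<le> (\<Sum>i\<in>UNIV. \<Sum>j\<in>UNIV - {i}. s i * s j * K$i$j)"
      proof -
        have "- (M * Q) = (\<Sum>i\<in>UNIV. \<Sum>j\<in>UNIV - {i}. - (M * \<bar>K$i$j\<bar>))"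
          unfolding Q_def by (simp add: sum_distrib_left sum_negf)
        also have "\<dots> \<le> (\<Sum>i\<in>UNIV. \<Sum>j\<in>UNIV - {i}. s i * s j * K$i$j)"
        proof (intro sum_mono)
          fix i j
          have "\<bar>s i * s j * K$i$j\<bar> \<le> M * \<bar>K$i$j\<bar>"
            using Mge[of i j] s0[of i] s0[of j] by (simp add: abs_mult mult_right_mono)
          then show "- (M * \<bar>K$i$j\<bar>) \<le> s i * s j * K$i$j" by linarith
        qed
        finally show ?thesis .
      qed
      ultimately show ?thesis unfolding qs_eq by linarith
    qed
    have "lam * \<mu> * m * T = lam * \<mu> * (m * T - M * Q) + lam * \<mu> * M * Q" by (simp add: algebra_simps)
    also have "\<dots> \<le> lam * \<mu> * qs + \<beta> * Q"
    proof (rule add_mono)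
      show "lam * \<mu> * (m * T - M * Q) \<le> lam * \<mu> * qs" using step7 l0 m1 by (intro mult_left_mono) auto
      show "lam * \<mu> * M * Q \<le> \<beta> * Q" using lmM Q0 by (intro mult_right_mono) auto
    qed
    also have "\<dots> \<le> lam * qs + \<beta> * Q"
    proof -
      have "lam * \<mu> * qs \<le> lam * 1 * qs" using m1 l0 qs0 by (intro mult_right_mono mult_left_mono) auto
      then show ?thesis by simp
    qed
    also have "\<dots> \<le> lam * qs - lam * Z + \<rho>0 * P" using step6 by linarith
    also have "\<dots> = lam * tr + \<rho>0 * P" unfolding \<open>tr = qs - Z\<close> by (simp add: algebra_simps)
    also have "\<dots> \<le> tr + \<rho>0 * P"
    proof -
      have "lam * tr \<le> 1 * tr" using l1 tr0 by (intro mult_right_mono) auto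
      then show ?thesis by simp
    qed
    finally show "lam * \<mu> * m * trace K \<le> trace (S ** K) + \<rho>0 * (\<Sum>i\<in>UNIV. \<Sum>j\<in>UNIV - {i}. max 0 (K$i$j))"
      unfolding T_def tr_def P_def .
  qed
qed

definition feas :: "ereal^'n^'n \<Rightarrow> ereal^'n^'n \<Rightarrow> real^'n^'n \<Rightarrow> bool" where
  "feas L U K \<longleftrightarrow> (\<forall>i j. i \<noteq> j \<longrightarrow> feas1 (L$i$j) (U$i$j) (K$i$j))"

definition pK :: "ereal^'n^'n \<Rightarrow> ereal^'n^'n \<Rightarrow> real^'n^'n \<Rightarrow> real" where
  "pK L U K = (\<Sum>i\<in>UNIV. \<Sum>j\<in>UNIV - {i}. phi (L$i$j) (U$i$j) (K$i$j))"

definition hobj :: "real^'n^'n \<Rightarrow> ereal^'n^'n \<Rightarrow> ereal^'n^'n \<Rightarrow> real^'n^'n \<Rightarrow> real" where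
  "hobj S L U K = - ln (det K) + trace (S ** K) + pK L U K"

lemma obj_feas:
  fixes S K :: "real^'n^'n" and L U :: "ereal^'n^'n"
  assumes L: "\<forall>i j. L$i$j \<le> 0" and U: "\<forall>i j. i \<noteq> j \<longrightarrow> U$i$j > 0" and F: "feas L U K"
  shows "gen_glasso_obj S L U K = ereal (hobj S L U K)"
proof -
  have "(\<Sum>i\<in>UNIV. \<Sum>j\<in>UNIV - {i}. max (L$i$j * ereal (K$i$j)) (U$i$j * ereal (K$i$j)))
      = (\<Sum>i\<in>UNIV. \<Sum>j\<in>UNIV - {i}. ereal (phi (L$i$j) (U$i$j) (K$i$j)))"
  proof (intro sum.cong refl)
    fix i j :: 'n assume "j \<in> UNIV - {i}"
    then have "i \<noteq> j" by auto
    then show "max (L$i$j * ereal (K$i$j)) (U$i$j * ereal (K$i$j)) = ereal (phi (L$i$j) (U$i$j) (K$i$j))"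
      using pen_feas[of "L$i$j" "U$i$j" "K$i$j"] L U F unfolding feas_def pen_def by auto
  qed
  then show ?thesis unfolding gen_glasso_obj_def hobj_def pK_def by simp
qed

lemma obj_infeas:
  fixes S K :: "real^'n^'n" and L U :: "ereal^'n^'n"
  assumes L: "\<forall>i j. L$i$j \<le> 0" and U: "\<forall>i j. i \<noteq> j \<longrightarrow> U$i$j > 0" and F: "\<not> feas L U K"
  shows "gen_glasso_obj S L U K = \<infinity>"
proof -
  obtain i j where ij: "i \<noteq> j" "\<not> feas1 (L$i$j) (U$i$j) (K$i$j)" using F unfolding feas_def by auto
  have "max (L$i$j * ereal (K$i$j)) (U$i$j * ereal (K$i$j)) = \<infinity>"
    using pen_infeas[of "L$i$j" "U$i$j" "K$i$j"] L U ij unfolding pen_def by auto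
  then have "(\<Sum>j\<in>UNIV - {i}. max (L$i$j * ereal (K$i$j)) (U$i$j * ereal (K$i$j))) = \<infinity>"
    using ij by (subst sum_Pinfty) auto
  then have "(\<Sum>i\<in>UNIV. \<Sum>j\<in>UNIV - {i}. max (L$i$j * ereal (K$i$j)) (U$i$j * ereal (K$i$j))) = \<infinity>"
    by (subst sum_Pinfty) auto
  then show ?thesis unfolding gen_glasso_obj_def by simp
qed

lemma feas_mid: "feas L U A \<Longrightarrow> feas L U B \<Longrightarrow> feas L U ((1/2) *\<^sub>R (A + B))"
  unfolding feas_def using feas1_mid by (fastforce simp: add_divide_distrib)

lemma pK_mid: "pK L U ((1/2) *\<^sub>R (A + B)) \<le> (pK L U A + pK L U B) / 2"
proof -
  have "pK L U ((1/2) *\<^sub>R (A + B)) = (\<Sum>i\<in>UNIV. \<Sum>j\<in>UNIV - {i}. phi (L$i$j) (U$i$j) ((A$i$j + B$i$j) / 2))"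
    unfolding pK_def by simp
  also have "\<dots> \<le> (\<Sum>i\<in>UNIV. \<Sum>j\<in>UNIV - {i}. (phi (L$i$j) (U$i$j) (A$i$j) + phi (L$i$j) (U$i$j) (B$i$j)) / 2)"
    by (intro sum_mono phi_conv)
  also have "\<dots> = (pK L U A + pK L U B) / 2"
    unfolding pK_def by (simp only: add_divide_distrib sum.distrib sum_divide_distrib[symmetric])
  finally show ?thesis .
qed

lemma trace_mid:
  fixes S A B :: "real^'n^'n"
  shows "trace (S ** ((1/2) *\<^sub>R (A + B))) = (trace (S ** A) + trace (S ** B)) / 2"
proof -
  have "trace (S ** ((1/2) *\<^sub>R (A + B))) = (\<Sum>i\<in>UNIV. \<Sum>k\<in>UNIV. (S$i$k * A$k$i + S$i$k * B$k$i) / 2)"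
    unfolding trace_def matrix_matrix_mult_def by (simp add: algebra_simps add_divide_distrib)
  also have "\<dots> = (trace (S ** A) + trace (S ** B)) / 2"
    unfolding trace_def matrix_matrix_mult_def
    by (simp only: add_divide_distrib sum.distrib sum_divide_distrib[symmetric] vec_lambda_beta)
  finally show ?thesis .
qed

lemma pd_psd: "pd_mat K \<Longrightarrow> 0 \<le> bf K x x"
  using pd_bf[of K x] by (cases "x = 0") (auto simp: bf_def)

lemma pd_diag_pos: "pd_mat K \<Longrightarrow> 0 < K$i$i"
  using pd_bf[of K "axis i 1"] bf_axis[of K i i] by (simp add: axis_eq_0_iff)

lemma pd_trace_pos:
  fixes K :: "real^'n^'n"
  shows "pd_mat K \<Longrightarrow> 0 < trace K"
  unfolding trace_def by (intro sum_pos) (auto intro: pd_diag_pos)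

lemma cont_det: "continuous_on S (det :: real^'n^'n \<Rightarrow> real)"
proof -
  have "continuous_on S (\<lambda>K::real^'n^'n. det K)" unfolding det_def by (intro continuous_intros)
  then show ?thesis by simp
qed

lemma cont_bfK: "continuous_on S (\<lambda>K::real^'n^'n. bf K x x)"
  unfolding bf_def inner_vec_def matrix_vector_mult_def by (intro continuous_intros)

lemma lin3_aux:
  fixes a a1 a2 b b1 b2 c c1 c2 :: real
  shows "a < (a1 + a2) / 2 \<Longrightarrow> b = (b1 + b2) / 2 \<Longrightarrow> c \<le> (c1 + c2) / 2 \<Longrightarrow>
    a + b + c < (a1 + b1 + c1 + (a2 + b2 + c2)) / 2"
  by (simp add: field_simps)

theorem gen_main:
  fixes S :: "real^'n^'n" and L U :: "ereal^'n^'n"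
  assumes pS: "psd_mat S" and dS: "\<forall>i. S$i$i > 0"
    and oS: "\<forall>i j. i \<noteq> j \<longrightarrow> S$i$j < sqrt (S$i$i * S$j$j)"
    and L: "\<forall>i j. L$i$j \<le> 0" and U: "\<forall>i j. i \<noteq> j \<longrightarrow> U$i$j > 0"
  shows "\<exists>!K. pd_mat K \<and> (\<forall>K'. pd_mat K' \<longrightarrow> gen_glasso_obj S L U K \<le> gen_glasso_obj S L U K')"
proof -
  have sS: "sym_mat S" and qS: "\<And>x. 0 \<le> bf S x x" using pS unfolding psd_mat_def bf_def by auto
  define g where "g p = (if U$(fst p)$(snd p) = \<infinity> then 1 else real_of_ereal (U$(fst p)$(snd p)))"
    for p :: "'n \<times> 'n"
  have gpos: "0 < g p" if "p \<in> {p. fst p \<noteq> snd p}" for p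
  proof -
    have "U$(fst p)$(snd p) > 0" using U that by auto
    then show ?thesis unfolding g_def by (cases "U$(fst p)$(snd p)") auto
  qed
  obtain \<rho>0 where r0: "\<rho>0 > 0" and rle: "\<forall>p\<in>{p. fst p \<noteq> snd p}. \<rho>0 \<le> g p"
    using finite_pos_lb[of "{p::'n\<times>'n. fst p \<noteq> snd p}" g] gpos by auto
  have rU: "ereal \<rho>0 \<le> U$i$j" if "i \<noteq> j" for i j
  proof -
    have "\<rho>0 \<le> g (i, j)" using rle that by auto
    moreover have "U$i$j > 0" using U that by auto
    ultimately show ?thesis unfolding g_def by (cases "U$i$j") auto
  qed
  obtain \<alpha> where a0: "\<alpha> > 0" and alb: "\<forall>K::real^'n^'n. sym_mat K \<and> (\<forall>x. 0 \<le> bf K x x) \<longrightarrow>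
           \<alpha> * trace K \<le> trace (S ** K) + \<rho>0 * (\<Sum>i\<in>UNIV. \<Sum>j\<in>UNIV - {i}. max 0 (K$i$j))"
    using trace_lb[OF pS dS oS r0] by blast
  have plb: "\<rho>0 * (\<Sum>i\<in>UNIV. \<Sum>j\<in>UNIV - {i}. max 0 (K$i$j)) \<le> pK L U K" if F: "feas L U K" for K
  proof -
    have "\<rho>0 * (\<Sum>i\<in>UNIV. \<Sum>j\<in>UNIV - {i}. max 0 (K$i$j)) = (\<Sum>i\<in>UNIV. \<Sum>j\<in>UNIV - {i}. \<rho>0 * max 0 (K$i$j))"
      by (simp add: sum_distrib_left)
    also have "\<dots> \<le> pK L U K" unfolding pK_def
    proof (intro sum_mono)
      fix i j :: 'n assume "j \<in> UNIV - {i}"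
      then have ij: "i \<noteq> j" by auto
      show "\<rho>0 * max 0 (K$i$j) \<le> phi (L$i$j) (U$i$j) (K$i$j)"
        using phi_lb[of "L$i$j" \<rho>0 "U$i$j" "K$i$j"] L rU[OF ij] r0 U ij F unfolding feas_def by auto
    qed
    finally show ?thesis .
  qed
  have p0: "0 \<le> pK L U K" if F: "feas L U K" for K
  proof -
    have "0 \<le> \<rho>0 * (\<Sum>i\<in>UNIV. \<Sum>j\<in>UNIV - {i}. max 0 (K$i$j))"
      using r0 by (intro mult_nonneg_nonneg sum_nonneg) auto
    then show ?thesis using plb[OF F] by linarith
  qed
  define c0 where "c0 = trace S"
  have c0pos: "c0 > 0" unfolding c0_def trace_def using dS by (intro sum_pos) auto
  define d where "d = CARD('n)"
  have d1: "real d \<ge> 1" unfolding d_def by simp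
  define R0 where "R0 = 2 * (c0 + ln (fact d) + real d * ln (2 * real d / \<alpha>)) / \<alpha>"
  define R where "R = max R0 1"
  have bound: "trace K \<le> R0 \<and> exp (- c0) \<le> det K"
    if K: "pd_mat K" "feas L U K" "hobj S L U K \<le> c0" for K
  proof -
    have sK: "sym_mat K" and qK: "\<And>x. 0 \<le> bf K x x" using K pd_sym pd_psd by auto
    define T where "T = trace K"
    have T0: "T > 0" unfolding T_def using pd_trace_pos K by blast
    have tr0: "0 \<le> trace (S ** K)" by (rule psd_trace_nonneg[OF sS qS sK qK])
    have pp: "0 \<le> pK L U K" by (rule p0[OF K(2)])
    have dK: "det K > 0" by (rule pd_det_pos[OF K(1)])
    have "det K \<le> fact d * T ^ d"
      using det_abs_bound[of K T] psd_entry_le_trace[OF sK qK] unfolding T_def d_def by force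
    then have "ln (det K) \<le> ln (fact d * T ^ d)" using dK by simp
    also have "\<dots> = ln (fact d) + real d * ln T" using T0 by (simp add: ln_mult ln_realpow)
    finally have lnd: "ln (det K) \<le> ln (fact d) + real d * ln T" .
    have "\<alpha> * T \<le> trace (S ** K) + pK L U K"
      using alb[rule_format, of K] sK qK plb[OF K(2)] unfolding T_def by force
    have hK: "- ln (det K) + trace (S ** K) + pK L U K \<le> c0" using K(3) unfolding hobj_def .
    define y where "y = \<alpha> * T / (2 * real d)"
    have y0: "y > 0" unfolding y_def using a0 T0 d1 by simp
    have Teq: "T = (2 * real d / \<alpha>) * y" unfolding y_def using a0 d1 by simp
    have "ln T = ln (2 * real d / \<alpha>) + ln y" unfolding Teq
      by (rule ln_mult_pos) (use a0 d1 y0 in auto)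
    also have "ln y \<le> y" using ln_le_minus_one[OF y0] by simp
    finally have "ln T \<le> ln (2 * real d / \<alpha>) + y" by simp
    then have "real d * ln T \<le> real d * ln (2 * real d / \<alpha>) + real d * y"
      using d1 by (simp add: distrib_left[symmetric] mult_left_mono)
    moreover have "real d * y = \<alpha> * T / 2" unfolding y_def using d1 by simp
    ultimately have "real d * ln T \<le> real d * ln (2 * real d / \<alpha>) + \<alpha> * T / 2" by simp
    then have "\<alpha> * T / 2 \<le> c0 + ln (fact d) + real d * ln (2 * real d / \<alpha>)"
      using lnd hK \<open>\<alpha> * T \<le> trace (S ** K) + pK L U K\<close> by linarith
    then have "T \<le> R0" unfolding R0_def using a0 by (simp add: field_simps)
    moreover have "- c0 \<le> ln (det K)" using hK tr0 pp by linarith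
    then have "exp (- c0) \<le> det K" using dK by (metis exp_le_cancel_iff exp_ln)
    ultimately show ?thesis unfolding T_def by simp
  qed
  define C where "C = {K::real^'n^'n. sym_mat K \<and> (\<forall>x. 0 \<le> bf K x x) \<and> feas L U K \<and>
                        (\<forall>i j. \<bar>K$i$j\<bar> \<le> R) \<and> exp (- c0) \<le> det K}"
  define I0 :: "real^'n^'n" where "I0 = mat 1"
  have I0C: "I0 \<in> C"
  proof -
    have "sym_mat I0" unfolding I0_def by (rule sym_I)
    moreover have "\<forall>x. 0 \<le> bf I0 x x" unfolding I0_def bf_I by simp
    moreover have "feas L U I0" unfolding I0_def feas_def feas1_def by (simp add: mat_def)
    moreover have "\<forall>i j. \<bar>I0$i$j\<bar> \<le> R" unfolding I0_def R_def by (simp add: mat_def max_def)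
    moreover have "exp (- c0) \<le> det I0" unfolding I0_def using c0pos by simp
    ultimately show ?thesis unfolding C_def by blast
  qed
  have pI0: "pK L U I0 = 0"
    unfolding pK_def I0_def by (intro sum.neutral ballI) (auto simp: mat_def)
  have hI0: "hobj S L U I0 = c0"
    unfolding hobj_def pI0 unfolding I0_def c0_def by (simp add: matrix_mul_rid)
  have Cb: "bounded C"
    unfolding bounded_iff
  proof (intro exI ballI)
    fix K assume "K \<in> C"
    then have KR: "\<bar>K$i$j\<bar> \<le> R" for i j unfolding C_def by blast
    have "norm K \<le> (\<Sum>i\<in>UNIV. norm (K$i))"
      unfolding norm_vec_def by (rule L2_set_le_sum) simp
    also have "\<dots> \<le> (\<Sum>i\<in>(UNIV::'n set). \<Sum>j\<in>(UNIV::'n set). R)"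
    proof (intro sum_mono)
      fix i
      have "norm (K$i) \<le> (\<Sum>j\<in>UNIV. \<bar>K$i$j\<bar>)" by (rule norm_le_l1_cart)
      also have "\<dots> \<le> (\<Sum>j\<in>(UNIV::'n set). R)" by (intro sum_mono KR)
      finally show "norm (K$i) \<le> (\<Sum>j\<in>(UNIV::'n set). R)" .
    qed
    finally show "norm K \<le> (\<Sum>i\<in>(UNIV::'n set). \<Sum>j\<in>(UNIV::'n set). R)" .
  qed
  have Cc: "closed C"
    unfolding C_def sym_mat_def feas_def feas1_def
    by (intro closed_Collect_conj closed_Collect_all closed_Collect_imp closed_Collect_eq
        closed_Collect_le open_Collect_const cont_det cont_bfK continuous_intros)
  have Ccomp: "compact C" using Cb Cc by (simp add: compact_eq_bounded_closed)
  have hcont: "continuous_on C (hobj S L U)"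
  proof -
    have "\<forall>K\<in>C. det K \<noteq> 0"
    proof
      fix K assume "K \<in> C"
      then have "exp (- c0) \<le> det K" unfolding C_def by blast
      moreover have "exp (- c0) > 0" by simp
      ultimately show "det K \<noteq> 0" by linarith
    qed
    then show ?thesis
      unfolding hobj_def pK_def phi_def trace_def matrix_matrix_mult_def
      by (intro continuous_intros cont_det) auto
  qed
  obtain Km where KmC: "Km \<in> C" and Kmin: "\<And>K. K \<in> C \<Longrightarrow> hobj S L U Km \<le> hobj S L U K"
    using continuous_attains_inf[OF Ccomp _ hcont] I0C by blast
  have KmF: "feas L U Km" and Kmsym: "sym_mat Km" and Kmq: "\<And>x. 0 \<le> bf Km x x"
    and Kmd: "exp (- c0) \<le> det Km" using KmC unfolding C_def by blast+
  have Kmpd: "pd_mat Km"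
  proof (rule psd_det_pd[OF Kmsym Kmq])
    have "exp (- c0) > 0" by simp
    then show "det Km \<noteq> 0" using Kmd by linarith
  qed
  have hKm: "hobj S L U Km \<le> c0" using Kmin[OF I0C] hI0 by simp
  have gKm: "gen_glasso_obj S L U Km = ereal (hobj S L U Km)" by (rule obj_feas[OF L U KmF])
  have minimal: "gen_glasso_obj S L U Km \<le> gen_glasso_obj S L U K'" if K': "pd_mat K'" for K'
  proof (cases "feas L U K'")
    case False
    then show ?thesis using obj_infeas[OF L U False] by simp
  next
    case True
    have "hobj S L U Km \<le> hobj S L U K'"
    proof (cases "hobj S L U K' \<le> c0")
      case True2: True
      have b: "trace K' \<le> R0 \<and> exp (- c0) \<le> det K'" by (rule bound[OF K' True True2])
      have sK': "sym_mat K'" and qK': "\<And>x. 0 \<le> bf K' x x" using K' pd_sym pd_psd by auto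
      have "\<forall>i j. \<bar>K'$i$j\<bar> \<le> R"
      proof (intro allI)
        fix i j
        have "\<bar>K'$i$j\<bar> \<le> trace K'" by (rule psd_entry_le_trace[OF sK' qK'])
        then show "\<bar>K'$i$j\<bar> \<le> R" using b unfolding R_def by linarith
      qed
      then have "K' \<in> C" unfolding C_def using sK' qK' True b by blast
      then show ?thesis by (rule Kmin)
    next
      case False
      then show ?thesis using hKm by linarith
    qed
    then show ?thesis using gKm obj_feas[OF L U True] by simp
  qed
  show ?thesis
  proof (rule ex1I[of _ Km])
    show "pd_mat Km \<and> (\<forall>K'. pd_mat K' \<longrightarrow> gen_glasso_obj S L U Km \<le> gen_glasso_obj S L U K')"
      using Kmpd minimal by blast
  next
    fix K assume K: "pd_mat K \<and> (\<forall>K'. pd_mat K' \<longrightarrow> gen_glasso_obj S L U K \<le> gen_glasso_obj S L U K')"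
    then have Kpd: "pd_mat K" and Kmin': "\<And>K'. pd_mat K' \<Longrightarrow> gen_glasso_obj S L U K \<le> gen_glasso_obj S L U K'"
      by auto
    have le1: "gen_glasso_obj S L U K \<le> gen_glasso_obj S L U Km" by (rule Kmin'[OF Kmpd])
    have le2: "gen_glasso_obj S L U Km \<le> gen_glasso_obj S L U K" by (rule minimal[OF Kpd])
    have KF: "feas L U K"
    proof (rule ccontr)
      assume "\<not> feas L U K"
      then have "gen_glasso_obj S L U K = \<infinity>" by (rule obj_infeas[OF L U])
      then show False using le1 gKm by simp
    qed
    have gK: "gen_glasso_obj S L U K = ereal (hobj S L U K)" by (rule obj_feas[OF L U KF])
    have heq: "hobj S L U K = hobj S L U Km" using le1 le2 gK gKm by simp
    show "K = Km"
    proof (rule ccontr)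
      assume ne: "K \<noteq> Km"
      define Mm where "Mm = (1/2) *\<^sub>R (K + Km)"
      have Mpd: "pd_mat Mm" unfolding Mm_def by (rule pd_mid[OF Kpd Kmpd])
      have MF: "feas L U Mm" unfolding Mm_def by (rule feas_mid[OF KF KmF])
      have "hobj S L U Mm < (hobj S L U K + hobj S L U Km) / 2"
      proof -
        have "- ln (det Mm) < (- ln (det K) + - ln (det Km)) / 2"
          unfolding Mm_def by (rule ln_det_mid_strict[OF Kpd Kmpd ne])
        moreover have "trace (S ** Mm) = (trace (S ** K) + trace (S ** Km)) / 2"
          unfolding Mm_def by (rule trace_mid)
        moreover have "pK L U Mm \<le> (pK L U K + pK L U Km) / 2"
          unfolding Mm_def by (rule pK_mid)
        ultimately show ?thesis unfolding hobj_def by (rule lin3_aux)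
      qed
      then have "hobj S L U Mm < hobj S L U Km" using heq by argo
      moreover have "gen_glasso_obj S L U Km \<le> gen_glasso_obj S L U Mm" by (rule minimal[OF Mpd])
      then have "hobj S L U Km \<le> hobj S L U Mm" using gKm obj_feas[OF L U MF] by simp
      ultimately show False by linarith
    qed
  qed
qed

lemma gen_pos_eq:
  fixes S K :: "real^'n^'n" and \<rho> :: real and L U :: "ereal^'n^'n"
  assumes r: "\<rho> > 0" and L: "L = (\<chi> i j. 0)" and U: "U = (\<chi> i j. if i = j then 0 else ereal \<rho>)"
  shows "gen_glasso_obj S L U K = ereal (pos_glasso_obj S \<rho> K)"
proof -
  have "(\<Sum>i\<in>UNIV. \<Sum>j\<in>UNIV - {i}. max (L$i$j * ereal (K$i$j)) (U$i$j * ereal (K$i$j)))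
      = (\<Sum>i\<in>UNIV. \<Sum>j\<in>UNIV - {i}. ereal (\<rho> * max 0 (K$i$j)))"
  proof (intro sum.cong refl)
    fix i j :: 'n assume "j \<in> UNIV - {i}"
    then have "i \<noteq> j" by auto
    then show "max (L$i$j * ereal (K$i$j)) (U$i$j * ereal (K$i$j)) = ereal (\<rho> * max 0 (K$i$j))"
      using r unfolding L U by (auto simp: max_def mult_le_0_iff zero_le_mult_iff zero_ereal_def[symmetric])
  qed
  then show ?thesis
    unfolding gen_glasso_obj_def pos_glasso_obj_def by (simp add: sum_distrib_left)
qed

theorem pos_main:
  fixes S :: "real^'n^'n" and \<rho> :: real
  assumes pS: "psd_mat S" and dS: "\<forall>i. S$i$i > 0" and r: "\<rho> > 0"
    and oS: "\<forall>i j. i \<noteq> j \<longrightarrow> S$i$j < sqrt (S$i$i * S$j$j)"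
  shows "\<exists>!K. pd_mat K \<and> (\<forall>K'. pd_mat K' \<longrightarrow> pos_glasso_obj S \<rho> K \<le> pos_glasso_obj S \<rho> K')"
proof -
  define L :: "ereal^'n^'n" where "L = (\<chi> i j. 0)"
  define U :: "ereal^'n^'n" where "U = (\<chi> i j. if i = j then 0 else ereal \<rho>)"
  have "\<exists>!K. pd_mat K \<and> (\<forall>K'. pd_mat K' \<longrightarrow> gen_glasso_obj S L U K \<le> gen_glasso_obj S L U K')"
    by (rule gen_main[OF pS dS oS]) (use r in \<open>auto simp: L_def U_def\<close>)
  then show ?thesis unfolding gen_pos_eq[OF r L_def U_def] by simp
qed

lemma gauss_dens_meas:
  fixes \<Sigma> :: "real^'n^'n"
  shows "(\<lambda>x::real^'n. ennreal ((2 * pi) powr (- real CARD('n) / 2) * det \<Sigma> powr (-1/2)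
       * exp (- (x \<bullet> (matrix_inv \<Sigma> *v x)) / 2))) \<in> borel_measurable lborel"
proof -
  have "continuous_on UNIV (\<lambda>x::real^'n. (2 * pi) powr (- real CARD('n) / 2) * det \<Sigma> powr (-1/2)
       * exp (- (x \<bullet> (matrix_inv \<Sigma> *v x)) / 2))"
    unfolding inner_vec_def matrix_vector_mult_def by (intro continuous_intros) auto
  then have "(\<lambda>x::real^'n. (2 * pi) powr (- real CARD('n) / 2) * det \<Sigma> powr (-1/2)
       * exp (- (x \<bullet> (matrix_inv \<Sigma> *v x)) / 2)) \<in> borel_measurable borel"
    by (rule borel_measurable_continuous_onI)
  then show ?thesis unfolding measurable_lborel2 by (rule measurable_compose[OF _ measurable_ennreal])
qed

lemma gauss_sets[simp]: "sets (gauss_vec \<Sigma>) = sets borel"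
  unfolding gauss_vec_def by simp

lemma gauss_space[simp]: "space (gauss_vec \<Sigma>) = UNIV"
  unfolding gauss_vec_def by simp

lemma gauss_sigma_finite: "sigma_finite_measure (gauss_vec \<Sigma>)"
  unfolding gauss_vec_def
  apply (subst sigma_finite_measure.sigma_finite_iff_density_finite[OF sigma_finite_lborel gauss_dens_meas])
  apply (rule AE_I2)
  apply simp
  done

lemma gauss_null:
  assumes "H \<in> null_sets lborel"
  shows "H \<in> null_sets (gauss_vec \<Sigma>)"
  unfolding gauss_vec_def
  apply (subst null_sets_density_iff[OF gauss_dens_meas])
  apply (rule conjI)
  using assms apply (metis null_setsD2)
  apply (rule AE_I'[OF assms])
  apply blast
  done

lemma hyperplane_null:
  fixes w :: "real^'n"
  assumes "w \<noteq> 0"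
  shows "{y. w \<bullet> y = 0} \<in> null_sets lborel"
proof -
  have "negligible {y. w \<bullet> y = 0}" using negligible_hyperplane[of w 0] assms by simp
  then have n: "{y. w \<bullet> y = 0} \<in> null_sets lebesgue" by (simp add: negligible_iff_null_sets)
  have s: "{y. w \<bullet> y = 0} \<in> sets lborel"
  proof -
    have "closed {y. w \<bullet> y = 0}" by (intro closed_Collect_eq continuous_intros)
    then show ?thesis by simp
  qed
  show ?thesis by (rule iffD1[OF null_sets_completion_iff[OF s] n])
qed

lemma comp_meas:
  fixes \<Sigma> :: "real^'n^'n"
  assumes "k \<in> I"
  shows "(\<lambda>X. X k $ i) \<in> borel_measurable (PiM I (\<lambda>_. gauss_vec \<Sigma>))"
proof -
  have "(\<lambda>X. X k) \<in> measurable (PiM I (\<lambda>_. gauss_vec \<Sigma>)) (gauss_vec \<Sigma>)"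
    by (rule measurable_component_singleton[OF assms])
  then have "(\<lambda>X. X k) \<in> measurable (PiM I (\<lambda>_. gauss_vec \<Sigma>)) borel"
    by (simp add: measurable_cong_sets[OF refl gauss_sets])
  then show ?thesis by (rule measurable_compose[OF _ borel_measurable_nth])
qed

lemma null_pair:
  fixes \<Sigma> :: "real^'n^'n" and i j :: 'n and n :: nat
  assumes ij: "i \<noteq> j" and n2: "n \<ge> 2"
  shows "{X \<in> space (PiM {..<n} (\<lambda>_. gauss_vec \<Sigma>)). X 0 $ i * X 1 $ j = X 1 $ i * X 0 $ j}
           \<in> null_sets (PiM {..<n} (\<lambda>_. gauss_vec \<Sigma>))"
proof -
  define G where "G = gauss_vec \<Sigma>"
  define M where "M = (\<lambda>_::nat. G)"
  interpret P: product_sigma_finite M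
    unfolding product_sigma_finite_def M_def G_def using gauss_sigma_finite by blast
  define J where "J = {..<n} - {1}"
  have IJ: "{..<n} = insert 1 J" and J1: "1 \<notin> J" and J0: "0 \<in> J" and fJ: "finite J"
    using n2 unfolding J_def by auto
  define Q where "Q X = (X 0 $ i * X 1 $ j = X 1 $ i * X 0 $ j)" for X :: "nat \<Rightarrow> real^'n"
  have m0i[measurable]: "(\<lambda>X. X 0 $ k) \<in> borel_measurable (PiM {..<n} M)" for k
    unfolding M_def G_def by (rule comp_meas) (use n2 in auto)
  have m1i[measurable]: "(\<lambda>X. X 1 $ k) \<in> borel_measurable (PiM {..<n} M)" for k
    unfolding M_def G_def by (rule comp_meas) (use n2 in auto)
  define F where "F X = X 0 $ i * X 1 $ j - X 1 $ i * X 0 $ j" for X :: "nat \<Rightarrow> real^'n"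
  have Fm: "F \<in> borel_measurable (PiM {..<n} M)"
    unfolding F_def by (intro borel_measurable_diff borel_measurable_times m0i m1i)
  have NF: "{X \<in> space (PiM {..<n} M). Q X} = F -` {0} \<inter> space (PiM {..<n} M)"
    unfolding Q_def F_def by auto
  have Nset: "{X \<in> space (PiM {..<n} M). Q X} \<in> sets (PiM {..<n} M)"
    unfolding NF by (rule measurable_sets[OF Fm]) simp
  have fmeas: "(\<lambda>X. indicator {X. Q X} X :: ennreal) \<in> borel_measurable (PiM (insert 1 J) M)"
  proof -
    have "{X. Q X} \<inter> space (PiM {..<n} M) \<in> sets (PiM {..<n} M)"
      using Nset by (simp add: Int_def conj_commute)
    then show ?thesis unfolding IJ[symmetric] by (simp add: borel_measurable_indicator_iff)
  qed
  define Z where "Z = {y::real^'n. axis i 1 \<bullet> y = 0}"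
  have Znull: "Z \<in> null_sets G" unfolding Z_def G_def
    by (rule gauss_null[OF hyperplane_null]) (simp add: axis_eq_0_iff)
  have inner: "(\<integral>\<^sup>+ x. indicator {X. Q X} (x(1 := y)) \<partial>PiM J M) \<le> \<infinity> * indicator Z y" for y
  proof (cases "y \<in> Z")
    case True
    then show ?thesis by simp
  next
    case False
    then have yi: "y $ i \<noteq> 0" unfolding Z_def by (simp add: inner_axis')
    define w where "w = y $ j *\<^sub>R axis i 1 - y $ i *\<^sub>R axis j (1::real)"
    have w0: "w \<noteq> 0"
    proof
      assume "w = 0"
      then have "w $ j = 0" by simp
      then show False using yi ij unfolding w_def by (simp add: axis_def)
    qed
    define H where "H = {u::real^'n. w \<bullet> u = 0}"
    have Hnull: "H \<in> null_sets G" unfolding H_def G_def by (rule gauss_null[OF hyperplane_null[OF w0]])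
    define A where "A k = (if k = 0 then H else UNIV)" for k :: nat
    have "(\<integral>\<^sup>+ x. indicator {X. Q X} (x(1 := y)) \<partial>PiM J M) = (\<integral>\<^sup>+ x. indicator (PiE J A) x \<partial>PiM J M)"
    proof (rule nn_integral_cong)
      fix x assume x: "x \<in> space (PiM J M)"
      have "Q (x(1 := y)) \<longleftrightarrow> x 0 \<in> H"
        unfolding Q_def H_def w_def by (simp add: inner_diff_left inner_axis' algebra_simps)
      moreover have "x \<in> PiE J A \<longleftrightarrow> x 0 \<in> H"
        using x J0 unfolding A_def by (auto simp: space_PiM PiE_iff M_def)
      ultimately show "indicator {X. Q X} (x(1 := y)) = (indicator (PiE J A) x :: ennreal)"
        by (simp add: indicator_def)
    qed
    also have "\<dots> = emeasure (PiM J M) (PiE J A)"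
    proof (rule nn_integral_indicator)
      show "PiE J A \<in> sets (PiM J M)"
        using Hnull unfolding A_def M_def by (intro sets_PiM_I_finite fJ) (auto simp: G_def)
    qed
    also have "\<dots> = (\<Prod>k\<in>J. emeasure (M k) (A k))"
      using Hnull by (intro P.emeasure_PiM fJ) (auto simp: A_def M_def G_def)
    also have "\<dots> = 0"
      using Hnull J0 fJ unfolding A_def M_def by (intro prod_zero bexI[of _ 0]) auto
    finally show ?thesis by simp
  qed
  have "emeasure (PiM {..<n} M) {X \<in> space (PiM {..<n} M). Q X} = (\<integral>\<^sup>+ X. indicator {X \<in> space (PiM {..<n} M). Q X} X \<partial>PiM {..<n} M)"
    by (rule nn_integral_indicator[OF Nset, symmetric])
  also have "\<dots> = (\<integral>\<^sup>+ X. indicator {X. Q X} X \<partial>PiM {..<n} M)"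
    by (rule nn_integral_cong) (auto simp: indicator_def)
  also have "\<dots> = (\<integral>\<^sup>+ y. (\<integral>\<^sup>+ x. indicator {X. Q X} (x(1 := y)) \<partial>PiM J M) \<partial>M 1)"
    unfolding IJ by (rule P.product_nn_integral_insert_rev[OF fJ J1 fmeas])
  also have "\<dots> \<le> (\<integral>\<^sup>+ y. \<infinity> * indicator Z y \<partial>M 1)"
    by (intro nn_integral_mono inner)
  also have "\<dots> = \<infinity> * emeasure G Z"
    using Znull unfolding M_def by (intro nn_integral_cmult_indicator) auto
  also have "\<dots> = 0" using null_setsD1[OF Znull] by simp
  finally have "emeasure (PiM {..<n} M) {X \<in> space (PiM {..<n} M). Q X} = 0" by simp
  then show ?thesis using Nset unfolding M_def G_def Q_def by (simp add: null_sets_def)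
qed

lemma lagrange_2:
  fixes a b :: "nat \<Rightarrow> real" and n :: nat
  assumes n2: "n \<ge> 2"
  shows "(a 0 * b 1 - a 1 * b 0)^2 \<le> (\<Sum>k<n. a k * a k) * (\<Sum>k<n. b k * b k) - (\<Sum>k<n. a k * b k)^2"
proof -
  define A where "A = (\<Sum>k<n. a k * a k)"
  define B where "B = (\<Sum>k<n. b k * b k)"
  define C where "C = (\<Sum>k<n. a k * b k)"
  define g where "g k l = (a k * b l - a l * b k)^2" for k l
  have gexp: "g k l = (a k * a k) * (b l * b l) + (b k * b k) * (a l * a l) - 2 * ((a k * b k) * (a l * b l))" for k l
    unfolding g_def by (simp add: power2_eq_square algebra_simps)
  have e1: "(\<Sum>k<n. \<Sum>l<n. (a k * a k) * (b l * b l)) = A * B"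
    unfolding A_def B_def by (rule sum_product[symmetric])
  have e2: "(\<Sum>k<n. \<Sum>l<n. (b k * b k) * (a l * a l)) = B * A"
    unfolding A_def B_def by (rule sum_product[symmetric])
  have e3: "(\<Sum>k<n. \<Sum>l<n. (a k * b k) * (a l * b l)) = C * C"
    unfolding C_def by (rule sum_product[symmetric])
  have "(\<Sum>k<n. \<Sum>l<n. g k l) = (\<Sum>k<n. \<Sum>l<n. (a k * a k) * (b l * b l)) + (\<Sum>k<n. \<Sum>l<n. (b k * b k) * (a l * a l))
      - 2 * (\<Sum>k<n. \<Sum>l<n. (a k * b k) * (a l * b l))"
    unfolding gexp by (simp only: sum.distrib sum_subtractf sum_distrib_left)
  then have key: "(\<Sum>k<n. \<Sum>l<n. g k l) = 2 * (A * B - C^2)"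
    unfolding e1 e2 e3 by (simp add: power2_eq_square algebra_simps)
  have g0: "g k l \<ge> 0" for k l unfolding g_def by simp
  have "(\<Sum>k\<in>{0,1}. \<Sum>l<n. g k l) \<le> (\<Sum>k<n. \<Sum>l<n. g k l)"
    using n2 g0 by (intro sum_mono2) (auto intro: sum_nonneg)
  moreover have "(\<Sum>k\<in>{0,1}. \<Sum>l<n. g k l) = (\<Sum>l<n. g 0 l) + (\<Sum>l<n. g 1 l)" by simp
  moreover have "g 0 1 \<le> (\<Sum>l<n. g 0 l)" using n2 g0 by (intro member_le_sum) auto
  moreover have "g 1 0 \<le> (\<Sum>l<n. g 1 l)" using n2 g0 by (intro member_le_sum) auto
  moreover have "g 1 0 = g 0 1" unfolding g_def by (simp add: power2_commute)
  ultimately have "2 * g 0 1 \<le> 2 * (A * B - C^2)" unfolding key by linarith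
  then show ?thesis unfolding g_def A_def B_def C_def by simp
qed

lemma cov_bad:
  fixes X :: "nat \<Rightarrow> real^'n" and n :: nat
  assumes n2: "n \<ge> 2"
    and bad: "\<not> sample_cov n X $i$j < sqrt (sample_cov n X $i$i * sample_cov n X $j$j)"
  shows "X 0 $ i * X 1 $ j = X 1 $ i * X 0 $ j"
proof -
  define A where "A = (\<Sum>k<n. X k $ i * X k $ i)"
  define B where "B = (\<Sum>k<n. X k $ j * X k $ j)"
  define C where "C = (\<Sum>k<n. X k $ i * X k $ j)"
  have n0: "real n > 0" using n2 by simp
  have A0: "A \<ge> 0" unfolding A_def by (intro sum_nonneg) simp
  have B0: "B \<ge> 0" unfolding B_def by (intro sum_nonneg) simp
  have "C / real n \<ge> sqrt (A / real n * (B / real n))"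
    using bad unfolding sample_cov_def A_def B_def C_def by simp
  moreover have "sqrt (A / real n * (B / real n)) = sqrt (A * B) / real n"
    using n0 by (simp add: real_sqrt_divide real_sqrt_mult power2_eq_square[symmetric])
  ultimately have "C / real n \<ge> sqrt (A * B) / real n" by simp
  then have Cs: "C \<ge> sqrt (A * B)" using n0 by (simp add: divide_le_cancel)
  have AB0: "0 \<le> A * B" using A0 B0 by simp
  have "sqrt (A * B) \<ge> 0" using AB0 by simp
  then have "C^2 \<ge> (sqrt (A * B))^2" using Cs by (intro power_mono) auto
  then have "C^2 \<ge> A * B" using AB0 by simp
  moreover have "(X 0 $ i * X 1 $ j - X 1 $ i * X 0 $ j)^2 \<le> A * B - C^2"
    unfolding A_def B_def C_def by (rule lagrange_2[OF n2])
  ultimately have "(X 0 $ i * X 1 $ j - X 1 $ i * X 0 $ j)^2 \<le> 0" by linarith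
  then show ?thesis by simp
qed

theorem part2:
  fixes \<Sigma> :: "real^'n^'n" and n :: nat
  assumes "pd_mat \<Sigma>" "n \<ge> 2"
  shows "AE X in PiM {..<n} (\<lambda>_. gauss_vec \<Sigma>).
         \<forall>i j. i \<noteq> j \<longrightarrow> sample_cov n X $i$j < sqrt (sample_cov n X $i$i * sample_cov n X $j$j)"
proof -
  have "AE X in PiM {..<n} (\<lambda>_. gauss_vec \<Sigma>). \<forall>p\<in>{p::'n\<times>'n. fst p \<noteq> snd p}.
      sample_cov n X $(fst p)$(snd p) < sqrt (sample_cov n X $(fst p)$(fst p) * sample_cov n X $(snd p)$(snd p))"
  proof (rule AE_finite_allI)
    fix p :: "'n \<times> 'n" assume p: "p \<in> {p. fst p \<noteq> snd p}"
    show "AE X in PiM {..<n} (\<lambda>_. gauss_vec \<Sigma>).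
      sample_cov n X $(fst p)$(snd p) < sqrt (sample_cov n X $(fst p)$(fst p) * sample_cov n X $(snd p)$(snd p))"
      by (rule AE_I'[OF null_pair[of "fst p" "snd p" n \<Sigma>]]) (use p assms(2) cov_bad in auto)
  qed simp
  then show ?thesis by (rule AE_mp) (auto intro!: AE_I2)
qed

theorem theorem8p8:
  shows
  "(\<forall>(S::real^'n^'n) \<rho>::real.
      psd_mat S \<and> (\<forall>i. S$i$i > 0) \<and> \<rho> > 0 \<and>
      (\<forall>i j. i \<noteq> j \<longrightarrow> S$i$j < sqrt (S$i$i * S$j$j)) \<longrightarrow>
      (\<exists>!K. pd_mat K \<and> (\<forall>K'. pd_mat K' \<longrightarrow> pos_glasso_obj S \<rho> K \<le> pos_glasso_obj S \<rho> K')))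
   \<and>
   (\<forall>(\<Sigma>::real^'n^'n) n::nat. pd_mat \<Sigma> \<and> n \<ge> 2 \<longrightarrow>
      (AE X in PiM {..<n} (\<lambda>_. gauss_vec \<Sigma>).
         \<forall>i j. i \<noteq> j \<longrightarrow> sample_cov n X $i$j < sqrt (sample_cov n X $i$i * sample_cov n X $j$j)))
   \<and>
   (\<forall>(S::real^'n^'n) (L::ereal^'n^'n) (U::ereal^'n^'n).
      psd_mat S \<and> (\<forall>i. S$i$i > 0) \<and>
      (\<forall>i j. i \<noteq> j \<longrightarrow> S$i$j < sqrt (S$i$i * S$j$j)) \<and>
      sym_mat L \<and> sym_mat U \<and> (\<forall>i j. L$i$j \<le> 0) \<and> (\<forall>i. L$i$i = 0 \<and> U$i$i = 0) \<and>
      (\<forall>i j. i \<noteq> j \<longrightarrow> U$i$j > 0) \<longrightarrow>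
      (\<exists>!K. pd_mat K \<and> (\<forall>K'. pd_mat K' \<longrightarrow> gen_glasso_obj S L U K \<le> gen_glasso_obj S L U K')))"
  proof (intro conjI allI impI)
  fix S :: "real^'n^'n" and \<rho> :: real
  assume a: "psd_mat S \<and> (\<forall>i. S$i$i > 0) \<and> \<rho> > 0 \<and>
      (\<forall>i j. i \<noteq> j \<longrightarrow> S$i$j < sqrt (S$i$i * S$j$j))"
  show "\<exists>!K. pd_mat K \<and> (\<forall>K'. pd_mat K' \<longrightarrow> pos_glasso_obj S \<rho> K \<le> pos_glasso_obj S \<rho> K')"
    using a by (elim conjE) (rule pos_main)
next
  fix \<Sigma> :: "real^'n^'n" and n :: nat
  assume a: "pd_mat \<Sigma> \<and> n \<ge> 2"
  show "AE X in PiM {..<n} (\<lambda>_. gauss_vec \<Sigma>).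
         \<forall>i j. i \<noteq> j \<longrightarrow> sample_cov n X $i$j < sqrt (sample_cov n X $i$i * sample_cov n X $j$j)"
    using a by (elim conjE) (rule part2)
next
  fix S :: "real^'n^'n" and L U :: "ereal^'n^'n"
  assume a: "psd_mat S \<and> (\<forall>i. S$i$i > 0) \<and>
      (\<forall>i j. i \<noteq> j \<longrightarrow> S$i$j < sqrt (S$i$i * S$j$j)) \<and>
      sym_mat L \<and> sym_mat U \<and> (\<forall>i j. L$i$j \<le> 0) \<and> (\<forall>i. L$i$i = 0 \<and> U$i$i = 0) \<and>
      (\<forall>i j. i \<noteq> j \<longrightarrow> U$i$j > 0)"
  show "\<exists>!K. pd_mat K \<and> (\<forall>K'. pd_mat K' \<longrightarrow> gen_glasso_obj S L U K \<le> gen_glasso_obj S L U K')"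
    using a by (elim conjE) (rule gen_main)
qed

end
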